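(* Let $m\in\mathcal{P}(\mathcal{S})$ be such that $Q^d(m)$ is irreducible for every deterministic stationary strategy $d\in D^s$. Then $\det(\tilde{Q}^\pi(m))\neq 0$ for all $\pi\in\Pi^s$, and $\det(\tilde{Q}^\pi(m))$ has the same sign for all $\pi\in\Pi^s$.
   Context: $\mathcal{S}=\{1,\dots,S\}$ ($S>1$), $\mathcal{A}=\{1,\dots,A\}$; for each $a$ and $m\in\mathcal{P}(\mathcal{S})$, $(Q_{ija}(m))_{i,j}$ is a conservative generator (off-diagonal $\ge0$, zero row sums). $\Pi^s$: stationary strategies, i.e. matrices $(\pi_{ia})$ with rows in $\mathcal{P}(\mathcal{A})$; $D^s\subseteq\Pi^s$: deterministic ones ($\pi_{ia}\in\{0,1\}$), identified with maps $d:\mathcal{S}\to\mathcal{A}$. $Q^\pi(m)_{ij}=\sum_aQ_{ija}(m)\pi_{ia}$. $\tilde{Q}^\pi(m)$ is $(Q^\pi(m))^T$ with its last row replaced by $(1,\dots,1)$. Irreducible: the directed graph with an edge $i\to j$ ($i\ne j$) whenever the $(i,j)$ entry is positive is strongly connected. *)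

theory Defs
  imports "Jordan_Normal_Form.Determinant"
begin

text \<open>States are 0..S-1, actions 0..A-1 (0-based shift of 1..S, 1..A).
  A generator family is Q i j a m (entry (i,j) of Q_a(m)); measures on the
  state space are vectors m :: nat => real restricted to indices below S.\<close>

definition prob_vec :: "nat \<Rightarrow> (nat \<Rightarrow> real) \<Rightarrow> bool" where
  "prob_vec n p \<longleftrightarrow> (\<forall>i<n. 0 \<le> p i) \<and> (\<Sum>i<n. p i) = 1"

definition conservative_generator :: "nat \<Rightarrow> (nat \<Rightarrow> nat \<Rightarrow> real) \<Rightarrow> bool" where
  "conservative_generator n M \<longleftrightarrow>
     (\<forall>i<n. \<forall>j<n. i \<noteq> j \<longrightarrow> 0 \<le> M i j) \<and> (\<forall>i<n. (\<Sum>j<n. M i j) = 0)"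

definition stationary_strategy :: "nat \<Rightarrow> nat \<Rightarrow> (nat \<Rightarrow> nat \<Rightarrow> real) \<Rightarrow> bool" where
  "stationary_strategy S A \<pi> \<longleftrightarrow> (\<forall>i<S. prob_vec A (\<pi> i))"

definition deterministic_strategy :: "nat \<Rightarrow> nat \<Rightarrow> (nat \<Rightarrow> nat \<Rightarrow> real) \<Rightarrow> bool" where
  "deterministic_strategy S A \<pi> \<longleftrightarrow>
     stationary_strategy S A \<pi> \<and> (\<forall>i<S. \<forall>a<A. \<pi> i a \<in> {0, 1})"

definition Qpol :: "nat \<Rightarrow> (nat \<Rightarrow> nat \<Rightarrow> nat \<Rightarrow> (nat \<Rightarrow> real) \<Rightarrow> real)
    \<Rightarrow> (nat \<Rightarrow> real) \<Rightarrow> (nat \<Rightarrow> nat \<Rightarrow> real) \<Rightarrow> nat \<Rightarrow> nat \<Rightarrow> real" where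
  "Qpol A Q m \<pi> i j = (\<Sum>a<A. Q i j a m * \<pi> i a)"

definition Qtilde :: "nat \<Rightarrow> nat \<Rightarrow> (nat \<Rightarrow> nat \<Rightarrow> nat \<Rightarrow> (nat \<Rightarrow> real) \<Rightarrow> real)
    \<Rightarrow> (nat \<Rightarrow> real) \<Rightarrow> (nat \<Rightarrow> nat \<Rightarrow> real) \<Rightarrow> real mat" where
  "Qtilde S A Q m \<pi> = mat S S (\<lambda>(i, j). if i = S - 1 then 1 else Qpol A Q m \<pi> j i)"

definition irreducible_mat :: "nat \<Rightarrow> (nat \<Rightarrow> nat \<Rightarrow> real) \<Rightarrow> bool" where
  "irreducible_mat n M \<longleftrightarrow>
     (\<forall>i<n. \<forall>j<n. (i, j) \<in> {(k, l). k < n \<and> l < n \<and> k \<noteq> l \<and> 0 < M k l}\<^sup>*)"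

end

theory Submission imports Defs begin

lemma maxprin:
  assumes cg: "conservative_generator n G" and k: "k<n" and mx: "\<forall>l<n. z l \<le> z k"
  shows "(\<Sum>l<n. G k l * z l) = (\<Sum>l<n. G k l * (z l - z k))"
    and "\<forall>l<n. G k l * (z l - z k) \<le> 0"
proof -
  have "(\<Sum>l<n. G k l * (z l - z k)) = (\<Sum>l<n. G k l * z l) - (\<Sum>l<n. G k l) * z k"
    by (simp add: right_diff_distrib sum_subtractf sum_distrib_right)
  with cg k show "(\<Sum>l<n. G k l * z l) = (\<Sum>l<n. G k l * (z l - z k))"
    by (simp add: conservative_generator_def)
  show "\<forall>l<n. G k l * (z l - z k) \<le> 0"
  proof (intro allI impI)
    fix l assume l: "l<n"
    show "G k l * (z l - z k) \<le> 0"
    proof (cases "l = k")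
      case False
      with cg k l have "G k l \<ge> 0" by (simp add: conservative_generator_def)
      moreover have "z l - z k \<le> 0" using mx l by simp
      ultimately show ?thesis by (simp add: mult_nonneg_nonpos)
    qed simp
  qed
qed

lemma exmax:
  fixes z :: "nat \<Rightarrow> real"
  assumes "n > 0" shows "\<exists>k<n. \<forall>l<n. z l \<le> z k"
proof -
  have "Max (z ` {..<n}) \<in> z ` {..<n}" using assms by (intro Max_in) auto
  then obtain k where k: "k<n" "z k = Max (z ` {..<n})" by auto
  then show ?thesis by (intro exI[of _ k]) auto
qed

lemma nonsing:
  assumes n: "n > 0" and cg: "conservative_generator n G" and irr: "irreducible_mat n G"
  shows "det (mat n n (\<lambda>(i,j). if i = n-1 then 1 else G j i)) \<noteq> 0"
proof
  define M where "M = mat n n (\<lambda>(i,j). if i = n-1 then 1 else G j i)"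
  assume "det (mat n n (\<lambda>(i,j). if i = n-1 then 1 else G j i)) = 0"
  hence "det M = 0" by (simp add: M_def)
  have Mc: "M \<in> carrier_mat n n" by (simp add: M_def)
  hence "det (transpose_mat M) = 0" using det_transpose \<open>det M = 0\<close> by metis
  then obtain v where v: "v \<in> carrier_vec n" "v \<noteq> 0\<^sub>v n" "transpose_mat M *\<^sub>v v = 0\<^sub>v n"
    using det_0_iff_vec_prod_zero[of "transpose_mat M" n] Mc by auto
  define z where "z i = (if i < n-1 then v$i else 0)" for i
  define c where "c = v$(n-1)"
  have nS: "n = Suc (n-1)" using n by simp
  have eq: "(\<Sum>i<n. G j i * z i) = - c" if j: "j<n" for j
  proof -
    have "(transpose_mat M *\<^sub>v v) $ j = 0" using v j by simp
    moreover have "(transpose_mat M *\<^sub>v v) $ j = (\<Sum>i\<in>{0..<n}. M $$ (i,j) * v$i)"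
      using v(1) j Mc by (auto simp add: scalar_prod_def intro!: sum.cong)
    ultimately have "(\<Sum>i\<in>{0..<n}. M $$ (i,j) * v$i) = 0" by simp
    hence "(\<Sum>i<n. M $$ (i,j) * v$i) = 0" by (simp add: atLeast0LessThan)
    hence "(\<Sum>i<n-1. M $$ (i,j) * v$i) + M $$ (n-1,j) * v$(n-1) = 0"
      by (metis nS sum.lessThan_Suc)
    hence "(\<Sum>i<n-1. G j i * v$i) + c = 0"
      using j n by (simp add: M_def c_def)
    moreover have "(\<Sum>i<n. G j i * z i) = (\<Sum>i<n-1. G j i * z i) + G j (n-1) * z (n-1)"
      by (metis nS sum.lessThan_Suc)
    moreover have "(\<Sum>i<n-1. G j i * z i) = (\<Sum>i<n-1. G j i * v$i)"
      by (simp add: z_def)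
    ultimately show ?thesis by (simp add: z_def)
  qed
  obtain k where k: "k<n" "\<forall>l<n. z l \<le> z k" using exmax[OF n] by blast
  obtain k' where k': "k'<n" "\<forall>l<n. - z l \<le> - z k'" using exmax[OF n, of "\<lambda>i. - z i"] by blast
  have "-c \<le> 0"
  proof -
    have "(\<Sum>l<n. G k l * z l) = (\<Sum>l<n. G k l * (z l - z k))" using maxprin[OF cg k] by blast
    also have "\<dots> \<le> 0" using maxprin(2)[OF cg k] by (intro sum_nonpos) auto
    finally show ?thesis using eq[OF k(1)] by simp
  qed
  moreover have "c \<le> 0"
  proof -
    have "(\<Sum>l<n. G k' l * (- z l)) = (\<Sum>l<n. G k' l * (- z l - - z k'))" using maxprin[OF cg k'] by blast
    also have "\<dots> \<le> 0" using maxprin(2)[OF cg k'] by (intro sum_nonpos) auto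
    finally have "(\<Sum>l<n. G k' l * (- z l)) \<le> 0" .
    moreover have "(\<Sum>l<n. G k' l * (- z l)) = - (\<Sum>l<n. G k' l * z l)"
      by (simp add: sum_negf)
    ultimately show ?thesis using eq[OF k'(1)] by simp
  qed
  ultimately have c0: "c = 0" by simp
  have step0: "z l = z b" if b: "b<n" "z b = z k" and l: "l<n" "b \<noteq> l" "0 < G b l" for b l
  proof -
    have mb: "\<forall>l<n. z l \<le> z b" using k b by simp
    have "(\<Sum>l<n. G b l * (z l - z b)) = 0" using maxprin(1)[OF cg b(1) mb] eq[OF b(1)] c0 by simp
    moreover have "\<forall>l\<in>{..<n}. G b l * (z l - z b) \<le> 0" using maxprin(2)[OF cg b(1) mb] by simp
    ultimately have "\<forall>l\<in>{..<n}. G b l * (z l - z b) = 0"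
      using sum_nonneg_eq_0_iff[of "{..<n}" "\<lambda>l. - (G b l * (z l - z b))"] by (simp add: sum_negf)
    with l show ?thesis by force
  qed
  have all: "z i = z k" if i: "i<n" for i
  proof -
    have "(k, i) \<in> {(k, l). k < n \<and> l < n \<and> k \<noteq> l \<and> 0 < G k l}\<^sup>*"
      using irr k(1) i unfolding irreducible_mat_def by blast
    then have "z i = z k"
    proof (induction rule: rtrancl_induct)
      case base then show ?case by simp
      case (step b l)
      then show ?case using step0[of b l] by auto
    qed
    then show ?thesis .
  qed
  have "z k = 0" using all[of "n-1"] n by (simp add: z_def)
  have "v = 0\<^sub>v n"
  proof (rule eq_vecI)
    show "dim_vec v = dim_vec (0\<^sub>v n)" using v by simp
    fix i assume "i < dim_vec (0\<^sub>v n)"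
    hence i: "i<n" by simp
    show "v $ i = 0\<^sub>v n $ i"
    proof (cases "i < n-1")
      case True then show ?thesis using all[OF i] \<open>z k = 0\<close> i by (simp add: z_def)
    next
      case False then have "i = n-1" using i by simp
      then show ?thesis using c0 i by (simp add: c_def)
    qed
  qed
  with v show False by simp
qed

lemma Qpol_cg:
  assumes gen: "\<And>a \<mu>. a < A \<Longrightarrow> prob_vec S \<mu> \<Longrightarrow> conservative_generator S (\<lambda>i j. Q i j a \<mu>)"
    and m: "prob_vec S m" and pi: "stationary_strategy S A \<pi>"
  shows "conservative_generator S (Qpol A Q m \<pi>)"
  unfolding conservative_generator_def
proof (intro conjI allI impI)
  fix i j assume ij: "i<S" "j<S" "i\<noteq>j"
  show "0 \<le> Qpol A Q m \<pi> i j" unfolding Qpol_def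
  proof (intro sum_nonneg)
    fix a assume "a \<in> {..<A}"
    then have "0 \<le> Q i j a m" "0 \<le> \<pi> i a" using gen[of a m] m pi ij
      by (auto simp: conservative_generator_def stationary_strategy_def prob_vec_def)
    then show "0 \<le> Q i j a m * \<pi> i a" by simp
  qed
next
  fix i assume i: "i<S"
  have "(\<Sum>j<S. Qpol A Q m \<pi> i j) = (\<Sum>a<A. (\<Sum>j<S. Q i j a m) * \<pi> i a)"
    unfolding Qpol_def by (simp add: sum.swap[of _ "{..<S}"] sum_distrib_right)
  also have "\<dots> = 0" using gen m i by (intro sum.neutral) (auto simp: conservative_generator_def)
  finally show "(\<Sum>j<S. Qpol A Q m \<pi> i j) = 0" .
qed

lemma Qpol_irr:
  assumes gen: "\<And>a \<mu>. a < A \<Longrightarrow> prob_vec S \<mu> \<Longrightarrow> conservative_generator S (\<lambda>i j. Q i j a \<mu>)"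
    and m: "prob_vec S m" and pi: "stationary_strategy S A \<pi>"
    and irr: "\<And>d. deterministic_strategy S A d \<Longrightarrow> irreducible_mat S (Qpol A Q m d)"
  shows "irreducible_mat S (Qpol A Q m \<pi>)"
proof -
  have ex: "\<exists>a<A. 0 < \<pi> i a" if i: "i<S" for i
  proof (rule ccontr)
    assume "\<not> ?thesis"
    then have "\<forall>a<A. \<pi> i a = 0" using pi i
      by (force simp: stationary_strategy_def prob_vec_def)
    then have "(\<Sum>a<A. \<pi> i a) = 0" by simp
    then show False using pi i by (simp add: stationary_strategy_def prob_vec_def)
  qed
  define c where "c i = (SOME a. a<A \<and> 0 < \<pi> i a)" for i
  have c: "c i < A" "0 < \<pi> i (c i)" if "i<S" for i
    using someI_ex[OF ex[OF that]] unfolding c_def by auto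
  define d where "d i a = (if a = c i then 1 else 0::real)" for i a
  have dd: "deterministic_strategy S A d"
    unfolding deterministic_strategy_def stationary_strategy_def prob_vec_def d_def
    using c by (auto simp: sum.delta)
  have Qd: "Qpol A Q m d k l = Q k l (c k) m" if "k<S" for k l
    unfolding Qpol_def d_def using c[OF that] by (simp add: if_distrib sum.delta cong: if_cong)
  have sub: "{(k, l). k < S \<and> l < S \<and> k \<noteq> l \<and> 0 < Qpol A Q m d k l}
     \<subseteq> {(k, l). k < S \<and> l < S \<and> k \<noteq> l \<and> 0 < Qpol A Q m \<pi> k l}"
  proof safe
    fix k l assume kl: "k<S" "l<S" "k\<noteq>l" "0 < Qpol A Q m d k l"
    then have pos: "0 < Q k l (c k) m" using Qd by simp
    have "Q k l (c k) m * \<pi> k (c k) \<le> Qpol A Q m \<pi> k l" unfolding Qpol_def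
    proof (rule member_le_sum)
      show "c k \<in> {..<A}" using c kl by simp
      fix a assume "a \<in> {..<A} - {c k}"
      then have "0 \<le> Q k l a m" "0 \<le> \<pi> k a" using gen[of a m] m pi kl
        by (auto simp: conservative_generator_def stationary_strategy_def prob_vec_def)
      then show "0 \<le> Q k l a m * \<pi> k a" by simp
    qed simp
    moreover have "0 < Q k l (c k) m * \<pi> k (c k)" using pos c kl by simp
    ultimately show "0 < Qpol A Q m \<pi> k l" by linarith
  qed
  show ?thesis using irr[OF dd] rtrancl_mono[OF sub] unfolding irreducible_mat_def by blast
qed


lemma cont_if_const: "continuous_on s f \<Longrightarrow> continuous_on s g \<Longrightarrow> continuous_on s (\<lambda>x. if b then f x else g x)"
  by (cases b) auto

theorem mainTheorem7:
  fixes S A :: nat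
    and Q :: "nat \<Rightarrow> nat \<Rightarrow> nat \<Rightarrow> (nat \<Rightarrow> real) \<Rightarrow> real"
    and m :: "nat \<Rightarrow> real"
  assumes "S > 1" and "A \<ge> 1"
    and gen: "\<And>a \<mu>. a < A \<Longrightarrow> prob_vec S \<mu> \<Longrightarrow>
                conservative_generator S (\<lambda>i j. Q i j a \<mu>)"
    and m: "prob_vec S m"
    and irr: "\<And>d. deterministic_strategy S A d \<Longrightarrow> irreducible_mat S (Qpol A Q m d)"
  shows "(\<forall>\<pi>. stationary_strategy S A \<pi> \<longrightarrow> det (Qtilde S A Q m \<pi>) \<noteq> 0) \<and>
         (\<forall>\<pi> \<pi>'. stationary_strategy S A \<pi> \<longrightarrow> stationary_strategy S A \<pi>' \<longrightarrow>
            sgn (det (Qtilde S A Q m \<pi>)) = sgn (det (Qtilde S A Q m \<pi>')))"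
proof -
  have nz: "det (Qtilde S A Q m \<pi>) \<noteq> 0" if pi: "stationary_strategy S A \<pi>" for \<pi>
    unfolding Qtilde_def
    using nonsing[of S "Qpol A Q m \<pi>"] \<open>S > 1\<close> Qpol_cg[OF gen m pi] Qpol_irr[OF gen m pi irr]
    by simp
  moreover have "sgn (det (Qtilde S A Q m \<pi>)) = sgn (det (Qtilde S A Q m \<pi>'))"
    if pi: "stationary_strategy S A \<pi>" and pi': "stationary_strategy S A \<pi>'" for \<pi> \<pi>'
  proof -
    define mix where "mix t = (\<lambda>i a. (1-t) * \<pi> i a + t * \<pi>' i a)" for t :: real
    define f where "f t = det (Qtilde S A Q m (mix t))" for t
    have st: "stationary_strategy S A (mix t)" if t: "0 \<le> t" "t \<le> 1" for t
      unfolding stationary_strategy_def prob_vec_def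
    proof (intro allI impI conjI)
      fix i a assume i: "i<S" and a: "a<A"
      have "0 \<le> \<pi> i a" "0 \<le> \<pi>' i a" using pi pi' i a
        by (auto simp: stationary_strategy_def prob_vec_def)
      then show "0 \<le> mix t i a" using t unfolding mix_def by simp
    next
      fix i assume i: "i<S"
      have "(\<Sum>a<A. \<pi> i a) = 1" "(\<Sum>a<A. \<pi>' i a) = 1" using pi pi' i
        by (auto simp: stationary_strategy_def prob_vec_def)
      then show "(\<Sum>a<A. mix t i a) = 1" unfolding mix_def
        by (simp add: sum.distrib sum_distrib_left[symmetric])
    qed
    have m0: "mix 0 = \<pi>" and m1: "mix 1 = \<pi>'" unfolding mix_def by auto
    define g where "g i j t = (if i = S - 1 then 1 else (\<Sum>a<A. Q j i a m * mix t j a))" for i j t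
    have feq: "f t = (\<Sum>p\<in>{p. p permutes {0..<S}}. signof p * (\<Prod>i=0..<S. g i (p i) t))" for t
    proof -
      have "f t = (\<Sum>p\<in>{p. p permutes {0..<S}}. signof p * (\<Prod>i=0..<S. Qtilde S A Q m (mix t) $$ (i, p i)))"
        unfolding f_def by (rule det_def') (simp add: Qtilde_def)
      also have "\<dots> = (\<Sum>p\<in>{p. p permutes {0..<S}}. signof p * (\<Prod>i=0..<S. g i (p i) t))"
      proof (intro sum.cong refl arg_cong2[where f="(*)"] prod.cong)
        fix p i assume p: "p \<in> {p. p permutes {0..<S}}" and i: "i \<in> {0..<S}"
        have "p i < S" using p i permutes_in_image[of p "{0..<S}" i] by auto
        then show "Qtilde S A Q m (mix t) $$ (i, p i) = g i (p i) t"
          using i unfolding Qtilde_def g_def Qpol_def by simp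
      qed
      finally show ?thesis .
    qed
    have cont: "continuous_on {0..1} f"
      unfolding feq[abs_def] g_def mix_def by (intro continuous_intros cont_if_const)
    have fnz: "f t \<noteq> 0" if "0 \<le> t" "t \<le> 1" for t
      unfolding f_def using nz[OF st[OF that]] .
    show ?thesis
    proof (rule ccontr)
      assume ne: "sgn (det (Qtilde S A Q m \<pi>)) \<noteq> sgn (det (Qtilde S A Q m \<pi>'))"
      have f0: "f 0 = det (Qtilde S A Q m \<pi>)" and f1: "f 1 = det (Qtilde S A Q m \<pi>')"
        unfolding f_def m0 m1 by auto
      have "f 0 \<noteq> 0" "f 1 \<noteq> 0" using fnz by auto
      with ne f0 f1 have "(f 0 < 0 \<and> 0 < f 1) \<or> (f 1 < 0 \<and> 0 < f 0)"
        by (auto simp: sgn_if split: if_splits)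
      then obtain x where "0 \<le> x" "x \<le> 1" "f x = 0"
        using IVT'[of f 0 0 1] IVT2'[of f 1 0 0] cont by force
      with fnz show False by blast
    qed
  qed
  ultimately show ?thesis by blast
qed

end
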